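(* Let $\rho:[0,1]\to(0,1]$ be a weakly increasing continuous function, and let $X_{opt}\in[0,1]$ be a maximizer over $x\in[0,1]$ of $\rho(x)\left(1-\int_0^x\frac{dx'}{\rho(x')}\right)$. Consider the pay-to-play mechanism defined by $\rho$, and fix a buyer type $v$ with total value $V$. Then there exists a dominant strategy for this buyer in which it pays at least $X_{opt}V$ in total to the seller. Moreover, if $X_{opt}$ is a strict maximizer, then every dominant strategy of the buyer pays at least $X_{opt}V$.
   Context: Continuous-time single-buyer setting: the buyer has a Lipschitz-continuous value function $v:[0,1]\to[0,\infty)$ with total value $V=\int_0^1 v(t)\,dt$ known to the seller. The pay-to-play mechanism defined by $\rho$: the buyer chooses a payment rate $x(t)\ge0$; letting $X(t)=\int_0^t x(s)\,ds$ be the total paid by time $t$, the seller allocates the item at rate $r(t)=\rho(X(t)/V)$; the buyer is limited-liability, so $x(t)\le r(t)v(t)$ for all $t$. The buyer's utility is $\int_0^1(r(t)v(t)-x(t))\,dt$; a dominant strategy is a utility-maximizing payment strategy. *)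

theory Defs
  imports "HOL-Analysis.Analysis"
begin

definition total_paid :: "(real \<Rightarrow> real) \<Rightarrow> real" where
  "total_paid x = integral {0..1} x"

definition alloc_rate :: "(real \<Rightarrow> real) \<Rightarrow> real \<Rightarrow> (real \<Rightarrow> real) \<Rightarrow> real \<Rightarrow> real" where
  "alloc_rate \<rho> V x t = \<rho> (integral {0..t} x / V)"

definition feasible :: "(real \<Rightarrow> real) \<Rightarrow> (real \<Rightarrow> real) \<Rightarrow> real \<Rightarrow> (real \<Rightarrow> real) \<Rightarrow> bool" where
  "feasible \<rho> v V x \<longleftrightarrow> x integrable_on {0..1} \<and>
     (\<forall>t\<in>{0..1}. 0 \<le> x t \<and> x t \<le> alloc_rate \<rho> V x t * v t)"

definition utility :: "(real \<Rightarrow> real) \<Rightarrow> (real \<Rightarrow> real) \<Rightarrow> real \<Rightarrow> (real \<Rightarrow> real) \<Rightarrow> real" where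
  "utility \<rho> v V x = integral {0..1} (\<lambda>t. alloc_rate \<rho> V x t * v t - x t)"

definition dominant :: "(real \<Rightarrow> real) \<Rightarrow> (real \<Rightarrow> real) \<Rightarrow> real \<Rightarrow> (real \<Rightarrow> real) \<Rightarrow> bool" where
  "dominant \<rho> v V x \<longleftrightarrow> feasible \<rho> v V x \<and>
     (\<forall>y. feasible \<rho> v V y \<longrightarrow> utility \<rho> v V y \<le> utility \<rho> v V x)"

definition objective :: "(real \<Rightarrow> real) \<Rightarrow> real \<Rightarrow> real" where
  "objective \<rho> a = \<rho> a * (1 - integral {0..a} (\<lambda>y. 1 / \<rho> y))"

end

theory Submission
  imports Defs
begin


locale P2P =
  fixes \<rho> v :: "real \<Rightarrow> real" and V :: real
  assumes rho_cont: "continuous_on {0..1} \<rho>"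
    and rho_mono: "mono_on {0..1} \<rho>"
    and rho_pos: "\<And>a. a \<in> {0..1} \<Longrightarrow> 0 < \<rho> a"
    and rho_le1: "\<And>a. a \<in> {0..1} \<Longrightarrow> \<rho> a \<le> 1"
    and v_cont: "continuous_on {0..1} v"
    and v_nonneg: "\<And>t. t \<in> {0..1} \<Longrightarrow> 0 \<le> v t"
    and V_def: "V = integral {0..1} v"
    and V_pos: "0 < V"
begin

definition G :: "real \<Rightarrow> real" where "G a = integral {0..a} (\<lambda>y. 1 / \<rho> y)"

lemma obj_eq: "objective \<rho> a = \<rho> a * (1 - G a)"
  by (simp add: objective_def G_def)

lemma rho_mono': "0 \<le> a \<Longrightarrow> a \<le> b \<Longrightarrow> b \<le> 1 \<Longrightarrow> \<rho> a \<le> \<rho> b"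
  using rho_mono by (auto simp: mono_on_def)

lemma inv_rho_cont: "continuous_on {0..1} (\<lambda>y. 1 / \<rho> y)"
  by (intro continuous_intros rho_cont) (use rho_pos in force)

lemma inv_rho_int: "0 \<le> a \<Longrightarrow> b \<le> 1 \<Longrightarrow> (\<lambda>y. 1 / \<rho> y) integrable_on {a..b}"
  by (rule integrable_subinterval_real[OF integrable_continuous_interval[OF inv_rho_cont]]) auto

lemma G_diff: assumes "0 \<le> a" "a \<le> b" "b \<le> 1"
  shows "G b - G a = integral {a..b} (\<lambda>y. 1 / \<rho> y)"
proof -
  have "integral {0..a} (\<lambda>y. 1 / \<rho> y) + integral {a..b} (\<lambda>y. 1 / \<rho> y) = integral {0..b} (\<lambda>y. 1 / \<rho> y)"
    by (rule Henstock_Kurzweil_Integration.integral_combine) (use assms inv_rho_int in auto)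
  then show ?thesis unfolding G_def by simp
qed

lemma G_diff_le: assumes "0 \<le> a" "a \<le> b" "b \<le> 1"
  shows "G b - G a \<le> (b - a) / \<rho> a"
proof -
  have "integral {a..b} (\<lambda>y. 1 / \<rho> y) \<le> integral {a..b} (\<lambda>y. 1 / \<rho> a)"
  proof (rule integral_le)
    show "(\<lambda>y. 1 / \<rho> y) integrable_on {a..b}" using inv_rho_int assms by auto
    show "(\<lambda>y. 1 / \<rho> a) integrable_on {a..b}" by (intro integrable_continuous_interval continuous_intros)
    fix y assume "y \<in> {a..b}"
    then show "1 / \<rho> y \<le> 1 / \<rho> a"
      using rho_mono'[of a y] rho_pos[of a] assms by (auto intro!: divide_left_mono)
  qed
  then show ?thesis using G_diff[OF assms] assms by (simp add: divide_simps)
qed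

lemma G0: "G 0 = 0" by (simp add: G_def)

lemma v_int: "0 \<le> a \<Longrightarrow> b \<le> 1 \<Longrightarrow> v integrable_on {a..b}"
  by (rule integrable_subinterval_real[OF integrable_continuous_interval[OF v_cont]]) auto

end


locale P2P_feas = P2P +
  fixes y :: "real \<Rightarrow> real"
  assumes feas: "feasible \<rho> v V y"
begin

definition X :: "real \<Rightarrow> real" where "X t = integral {0..t} y"

lemma y_int: "y integrable_on {0..1}" using feas by (simp add: feasible_def)
lemma y_nonneg: "t \<in> {0..1} \<Longrightarrow> 0 \<le> y t" using feas by (simp add: feasible_def)
lemma y_le: "t \<in> {0..1} \<Longrightarrow> y t \<le> \<rho> (X t / V) * v t"
  using feas by (simp add: feasible_def alloc_rate_def X_def)
lemma y_int_sub: "0 \<le> a \<Longrightarrow> b \<le> 1 \<Longrightarrow> y integrable_on {a..b}"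
  by (rule integrable_subinterval_real[OF y_int]) auto

lemma X_split: assumes "0 \<le> s" "s \<le> t" "t \<le> 1"
  shows "X t = X s + integral {s..t} y"
  unfolding X_def
  by (rule Henstock_Kurzweil_Integration.integral_combine[symmetric]) (use assms y_int_sub in auto)

lemma int_y_nonneg: "0 \<le> s \<Longrightarrow> t \<le> 1 \<Longrightarrow> 0 \<le> integral {s..t} y"
  by (rule integral_nonneg) (use y_int_sub y_nonneg in auto)

lemma X_mono: "0 \<le> s \<Longrightarrow> s \<le> t \<Longrightarrow> t \<le> 1 \<Longrightarrow> X s \<le> X t"
  using X_split[of s t] int_y_nonneg[of s t] by simp

lemma X0: "X 0 = 0" by (simp add: X_def)

lemma X_nonneg: "0 \<le> t \<Longrightarrow> t \<le> 1 \<Longrightarrow> 0 \<le> X t"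
  using X_mono[of 0 t] X0 by simp

lemma X_cont: "continuous_on {0..1} X"
  unfolding X_def by (rule indefinite_integral_continuous_1[OF y_int])

lemma v_zero_after: assumes "0 \<le> s" "s < 1" "integral {s..1} v = 0" "s \<le> t" "t \<le> 1"
  shows "v t = 0"
proof -
  have "(v has_integral 0) (cbox s 1)"
    using assms v_int[of s 1] by (simp add: has_integral_integral[symmetric] has_integral_iff)
  then show ?thesis
    using has_integral_0_cbox_imp_0[of s 1 v t] assms v_nonneg continuous_on_subset[OF v_cont, of "{s..1}"]
    by auto
qed

lemma X_le_V: assumes "0 \<le> t1" "t1 \<le> 1" shows "X t1 \<le> V"
proof (rule ccontr)
  assume "\<not> X t1 \<le> V"
  then have gt: "X t1 > V" by simp
  obtain ts where ts: "0 \<le> ts" "ts \<le> t1" "X ts = V"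
    using IVT'[of X 0 V t1] X0 V_pos gt assms continuous_on_subset[OF X_cont] by force
  have ts1: "ts < 1" using ts gt assms by (cases "ts = t1") auto
  have yv: "y s \<le> v s" if "s \<in> {0..ts}" for s
  proof -
    have "0 \<le> X s / V" "X s / V \<le> 1"
      using that X_nonneg X_mono[of s ts] ts ts1 V_pos by auto
    then have "\<rho> (X s / V) \<le> 1" by (intro rho_le1) auto
    moreover have "0 \<le> \<rho> (X s / V)" using rho_pos[of "X s / V"] \<open>0 \<le> X s / V\<close> \<open>X s / V \<le> 1\<close> by simp
    moreover have "0 \<le> v s" using v_nonneg[of s] that ts1 by simp
    ultimately have "\<rho> (X s / V) * v s \<le> v s" by (intro mult_left_le_one_le)
    moreover have "y s \<le> \<rho> (X s / V) * v s" using y_le[of s] that ts1 by simp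
    ultimately show ?thesis by linarith
  qed
  have "X ts \<le> integral {0..ts} v"
    unfolding X_def by (rule integral_le) (use yv y_int_sub v_int ts1 in auto)
  moreover have "integral {0..ts} v + integral {ts..1} v = V"
    unfolding V_def by (rule Henstock_Kurzweil_Integration.integral_combine) (use ts ts1 v_int in auto)
  moreover have "0 \<le> integral {ts..1} v"
    by (rule integral_nonneg) (use v_int v_nonneg ts in auto)
  ultimately have "integral {ts..1} v = 0" using ts by linarith
  then have v0: "v s = 0" if "ts \<le> s" "s \<le> 1" for s using v_zero_after ts ts1 that by auto
  have "integral {ts..t1} y = 0"
  proof -
    have "integral {ts..t1} y = integral {ts..t1} (\<lambda>_. 0::real)"
    proof (rule integral_cong)
      fix s assume "s \<in> {ts..t1}"
      then show "y s = 0" using y_le[of s] y_nonneg[of s] v0[of s] ts assms by auto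
    qed
    then show ?thesis by simp
  qed
  then show False using X_split[of ts t1] ts assms gt by simp
qed

definition u :: "real \<Rightarrow> real" where "u t = X t / V"

lemma u_range: "0 \<le> t \<Longrightarrow> t \<le> 1 \<Longrightarrow> u t \<in> {0..1}"
  unfolding u_def using X_le_V X_nonneg V_pos by auto

lemma u_mono: "0 \<le> s \<Longrightarrow> s \<le> t \<Longrightarrow> t \<le> 1 \<Longrightarrow> u s \<le> u t"
  unfolding u_def using X_mono V_pos by (simp add: divide_right_mono)

lemma u_cont: "continuous_on {0..1} u"
  unfolding u_def by (intro continuous_intros X_cont) (use V_pos in auto)

lemma rho_u_cont: "continuous_on {0..1} (\<lambda>t. \<rho> (u t))"
  by (rule continuous_on_compose2[OF rho_cont u_cont]) (use u_range in auto)

lemma h_cont: "continuous_on {0..1} (\<lambda>t. 1 / \<rho> (u t))"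
  by (intro continuous_intros rho_u_cont) (use rho_pos u_range in force)


definition p :: "real \<Rightarrow> real" where "p t = 1 / \<rho> (u t) * y t"

lemma p_int: "p integrable_on {0..1}"
proof -
  have "(\<lambda>t. 1 / \<rho> (u t) * y t) absolutely_integrable_on {0..1}"
  proof (rule absolutely_integrable_bounded_measurable_product_real)
    show "(\<lambda>t. 1 / \<rho> (u t)) \<in> borel_measurable (lebesgue_on {0..1})"
      by (rule continuous_imp_measurable_on_sets_lebesgue[OF h_cont]) auto
    show "{0..1::real} \<in> sets lebesgue" by auto
    show "bounded ((\<lambda>t. 1 / \<rho> (u t)) ` {0..1})"
      by (rule compact_imp_bounded[OF compact_continuous_image[OF h_cont]]) auto
    show "y absolutely_integrable_on {0..1}"
      by (rule nonnegative_absolutely_integrable_1[OF y_int]) (use y_nonneg in auto)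
  qed
  then show ?thesis unfolding p_def using set_lebesgue_integral_eq_integral(1) by blast
qed

lemma p_int_sub: "0 \<le> a \<Longrightarrow> b \<le> 1 \<Longrightarrow> p integrable_on {a..b}"
  by (rule integrable_subinterval_real[OF p_int]) auto

lemma p_le_v: "t \<in> {0..1} \<Longrightarrow> p t \<le> v t"
proof -
  assume t: "t \<in> {0..1}"
  have r: "0 < \<rho> (u t)" using rho_pos u_range t by auto
  have "y t \<le> \<rho> (u t) * v t" using y_le[OF t] by (simp add: u_def)
  then show ?thesis using r unfolding p_def by (simp add: divide_simps mult.commute)
qed

lemma step_bound:
  assumes cd: "0 \<le> c" "c \<le> d" "d \<le> 1" and e: "\<bar>1 / \<rho> (u d) - 1 / \<rho> (u c)\<bar> \<le> e"
  shows "G (u d) - G (u c) \<le> integral {c..d} p / V + e * (u d - u c)"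
proof -
  have uc: "u c \<in> {0..1}" and ud: "u d \<in> {0..1}" using u_range cd by auto
  have ucd: "u c \<le> u d" using u_mono cd by auto
  have 1: "G (u d) - G (u c) \<le> (u d - u c) * (1 / \<rho> (u c))"
    using G_diff_le[of "u c" "u d"] uc ud ucd by simp
  have "integral {c..d} (\<lambda>t. 1 / \<rho> (u d) * y t) \<le> integral {c..d} p"
  proof (rule integral_le)
    show "(\<lambda>t. 1 / \<rho> (u d) * y t) integrable_on {c..d}"
      using y_int_sub[of c d] cd by (intro integrable_on_mult_right) auto
    show "p integrable_on {c..d}" using p_int_sub cd by auto
    fix t assume t: "t \<in> {c..d}"
    have "u t \<in> {0..1}" using u_range t cd by auto
    moreover have "u t \<le> u d" using u_mono t cd by auto
    ultimately have "\<rho> (u t) \<le> \<rho> (u d)" "0 < \<rho> (u t)" using rho_mono' ud rho_pos by auto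
    then have "1 / \<rho> (u d) \<le> 1 / \<rho> (u t)" by (intro divide_left_mono) auto
    then show "1 / \<rho> (u d) * y t \<le> p t" unfolding p_def
      using y_nonneg[of t] t cd by (intro mult_right_mono) auto
  qed
  moreover have "integral {c..d} (\<lambda>t. 1 / \<rho> (u d) * y t) = 1 / \<rho> (u d) * (X d - X c)"
    using X_split[of c d] cd by simp
  ultimately have A: "1 / \<rho> (u d) * (X d - X c) / V \<le> integral {c..d} p / V"
    using V_pos by (intro divide_right_mono) auto
  have "(u d - u c) * (1 / \<rho> (u d)) = 1 / \<rho> (u d) * (X d - X c) / V"
    unfolding u_def by (simp add: diff_divide_distrib mult.commute)
  with A have 2: "(u d - u c) * (1 / \<rho> (u d)) \<le> integral {c..d} p / V" by simp
  have 3: "(u d - u c) * (1 / \<rho> (u c)) \<le> (u d - u c) * (1 / \<rho> (u d)) + (u d - u c) * e"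
  proof -
    have "1 / \<rho> (u c) \<le> 1 / \<rho> (u d) + e" using e by linarith
    then have "(u d - u c) * (1 / \<rho> (u c)) \<le> (u d - u c) * (1 / \<rho> (u d) + e)"
      using ucd by (intro mult_left_mono) auto
    then show ?thesis by (simp add: algebra_simps)
  qed
  show ?thesis using 1 2 3 by (simp add: algebra_simps)
qed

lemma sum_bound:
  assumes n: "0 < n" and e: "0 \<le> e"
    and uc: "\<And>c d. 0 \<le> c \<Longrightarrow> c \<le> d \<Longrightarrow> d \<le> 1 \<Longrightarrow> d - c \<le> 1 / real n \<Longrightarrow>
               \<bar>1 / \<rho> (u d) - 1 / \<rho> (u c)\<bar> \<le> e"
  shows "k \<le> n \<Longrightarrow> G (u (real k / real n)) \<le> integral {0..real k / real n} p / V + e * u (real k / real n)"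
proof (induction k)
  case 0
  then show ?case using G0 X0 by (simp add: u_def)
next
  case (Suc k)
  define c where "c = real k / real n"
  define d where "d = real (Suc k) / real n"
  have cd: "0 \<le> c" "c \<le> d" "d \<le> 1" "d - c \<le> 1 / real n"
    using Suc.prems n by (auto simp: c_def d_def divide_simps)
  have IH: "G (u c) \<le> integral {0..c} p / V + e * u c" using Suc by (simp add: c_def)
  have st: "G (u d) - G (u c) \<le> integral {c..d} p / V + e * (u d - u c)"
    by (rule step_bound) (use cd uc in auto)
  have "integral {0..c} p + integral {c..d} p = integral {0..d} p"
    by (rule Henstock_Kurzweil_Integration.integral_combine) (use cd p_int_sub in auto)
  then have "integral {0..d} p / V = integral {0..c} p / V + integral {c..d} p / V"
    by (simp add: add_divide_distrib[symmetric])
  then have "G (u d) \<le> integral {0..d} p / V + e * u d"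
    using IH st by (simp add: algebra_simps)
  then show ?case by (simp add: d_def)
qed

lemma G_bound: assumes e: "0 < e" shows "G (u 1) \<le> integral {0..1} p / V + e"
proof -
  have "uniformly_continuous_on {0..1} (\<lambda>t. 1 / \<rho> (u t))"
    by (rule compact_uniformly_continuous[OF h_cont]) auto
  then obtain \<delta> where \<delta>: "\<delta> > 0" and
    hd: "\<And>c d. c \<in> {0..1} \<Longrightarrow> d \<in> {0..1} \<Longrightarrow> dist d c < \<delta> \<Longrightarrow> dist (1 / \<rho> (u d)) (1 / \<rho> (u c)) < e"
    unfolding uniformly_continuous_on_def using e by metis
  obtain n :: nat where n: "0 < n" "1 / real n < \<delta>"
    using \<delta> by (metis ex_inverse_of_nat_less inverse_eq_divide)
  have uc: "\<bar>1 / \<rho> (u d) - 1 / \<rho> (u c)\<bar> \<le> e"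
    if "0 \<le> c" "c \<le> d" "d \<le> 1" "d - c \<le> 1 / real n" for c d
    using hd[of c d] that n by (simp add: dist_real_def)
  have "G (u (real n / real n)) \<le> integral {0..real n / real n} p / V + e * u (real n / real n)"
    by (rule sum_bound[OF n(1) _ uc]) (use e in auto)
  moreover have "e * u 1 \<le> e" using u_range[of 1] e by (simp add: mult_left_le)
  ultimately show ?thesis using n by simp
qed

lemma utility_eq: "utility \<rho> v V y = integral {0..1} (\<lambda>t. \<rho> (u t) * v t - y t)"
  by (simp add: utility_def alloc_rate_def u_def X_def)

lemma total_paid_eq: "total_paid y / V = u 1"
  by (simp add: total_paid_def u_def X_def)

lemma utility_bound: "utility \<rho> v V y \<le> V * objective \<rho> (u 1)"
proof -
  define a where "a = u 1"
  have a: "a \<in> {0..1}" using u_range[of 1] by (simp add: a_def)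
  have ra: "0 < \<rho> a" "\<rho> a \<le> 1" using rho_pos rho_le1 a by auto
  have int1: "(\<lambda>t. \<rho> (u t) * v t - y t) integrable_on {0..1}"
    by (intro integrable_diff y_int integrable_continuous_interval continuous_intros rho_u_cont v_cont)
  have int2: "(\<lambda>t. \<rho> a * v t - \<rho> a * p t) integrable_on {0..1}"
    by (intro integrable_diff integrable_on_mult_right p_int v_int) auto
  have "integral {0..1} (\<lambda>t. \<rho> (u t) * v t - y t) \<le> integral {0..1} (\<lambda>t. \<rho> a * v t - \<rho> a * p t)"
  proof (rule integral_le[OF int1 int2])
    fix t :: real assume t: "t \<in> {0..1}"
    have ut: "u t \<in> {0..1}" "u t \<le> a" using u_range u_mono t by (auto simp: a_def)
    have r: "0 < \<rho> (u t)" "\<rho> (u t) \<le> \<rho> a" using rho_pos rho_mono' ut a by auto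
    have yp: "y t = \<rho> (u t) * p t" using r by (simp add: p_def)
    have "0 \<le> (\<rho> a - \<rho> (u t)) * (v t - p t)" using r p_le_v[OF t] by simp
    then show "\<rho> (u t) * v t - y t \<le> \<rho> a * v t - \<rho> a * p t"
      unfolding yp by (simp add: algebra_simps)
  qed
  also have "\<dots> = \<rho> a * V - \<rho> a * integral {0..1} p"
    using p_int v_int[of 0 1] by (simp add: integral_diff integrable_on_mult_right V_def[symmetric])
  finally have U: "utility \<rho> v V y \<le> \<rho> a * V - \<rho> a * integral {0..1} p"
    by (simp add: utility_eq)
  have E: "utility \<rho> v V y \<le> V * objective \<rho> a + V * e" if e: "0 < e" for e
  proof -
    have "G a \<le> integral {0..1} p / V + e" using G_bound[OF e] by (simp add: a_def)
    then have "V * G a - V * e \<le> integral {0..1} p" using V_pos by (simp add: field_simps)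
    then have "\<rho> a * (V * G a - V * e) \<le> \<rho> a * integral {0..1} p"
      using ra by (intro mult_left_mono) auto
    moreover have "\<rho> a * V * e \<le> V * e" using ra V_pos e by simp
    ultimately show ?thesis using U by (simp add: obj_eq algebra_simps)
  qed
  have "utility \<rho> v V y \<le> V * objective \<rho> a + e" if "0 < e" for e
    using E[of "e / V"] V_pos that by simp
  then have "utility \<rho> v V y \<le> V * objective \<rho> a"
    by (rule field_le_epsilon)
  then show ?thesis by (simp add: a_def)
qed

end



locale P2P_opt = P2P +
  fixes Xo :: real
  assumes Xo_in: "Xo \<in> {0..1}" and GXo: "G Xo < 1"
begin

definition rr :: "real \<Rightarrow> real" where "rr a = \<rho> (max 0 (min 1 a))"

lemma rr_cont: "continuous_on UNIV rr"
  unfolding rr_def by (rule continuous_on_compose2[OF rho_cont]) (auto intro!: continuous_intros)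

lemma rr_pos: "0 < rr a" and rr_le1: "rr a \<le> 1"
  unfolding rr_def by (auto intro!: rho_pos rho_le1)

lemma rr_eq: "a \<in> {0..1} \<Longrightarrow> rr a = \<rho> a" by (simp add: rr_def)

lemma irr_cont: "continuous_on S (\<lambda>a. 1 / rr a)"
  by (intro continuous_intros continuous_on_subset[OF rr_cont]) (use rr_pos in \<open>auto simp: less_imp_neq[symmetric]\<close>)

lemma irr_int: "(\<lambda>a. 1 / rr a) integrable_on {a..b}"
  by (rule integrable_continuous_interval[OF irr_cont])

definition GG :: "real \<Rightarrow> real" where "GG a = integral {-1..a} (\<lambda>y. 1 / rr y)"

lemma GG_diff: "a \<le> b \<Longrightarrow> -1 \<le> a \<Longrightarrow> GG b - GG a = integral {a..b} (\<lambda>y. 1 / rr y)"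
  unfolding GG_def using Henstock_Kurzweil_Integration.integral_combine[of "-1" a b "\<lambda>y. 1 / rr y"] irr_int
  by simp

lemma GG_strict: assumes "-1 \<le> a" "a < b" shows "GG a < GG b"
proof -
  have "integral {a..b} (\<lambda>y. 1::real) \<le> integral {a..b} (\<lambda>y. 1 / rr y)"
    by (rule integral_le) (use irr_int rr_pos rr_le1 in \<open>auto simp: divide_simps\<close>)
  then show ?thesis using GG_diff[of a b] assms by simp
qed

lemma GG_cont: "continuous_on {-1..2} GG"
  unfolding GG_def by (rule indefinite_integral_continuous_1[OF irr_int])

lemma GG_deriv: assumes "a \<in> {-1<..<2}" shows "(GG has_real_derivative 1 / rr a) (at a)"
proof -
  have "(GG has_real_derivative 1 / rr a) (at a within {-1..2})"
    unfolding GG_def by (rule integral_has_real_derivative[OF irr_cont]) (use assms in auto)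
  moreover have "at a within {-1..2} = at a"
    by (rule at_within_interior) (use assms in auto)
  ultimately show ?thesis by simp
qed

lemma GG_G: assumes "a \<in> {0..1}" shows "GG a = GG 0 + G a"
proof -
  have "integral {0..a} (\<lambda>y. 1 / rr y) = integral {0..a} (\<lambda>y. 1 / \<rho> y)"
    by (rule integral_cong) (use assms rr_eq in auto)
  then show ?thesis using GG_diff[of 0 a] assms unfolding G_def by simp
qed

lemma GG_inj: "inj_on GG {-1..2}"
  by (rule strict_mono_on_imp_inj_on) (auto simp: strict_mono_on_def intro: GG_strict)

definition Ginv where "Ginv = inv_into {-1..2} GG"

lemma Ginv_GG: "a \<in> {-1..2} \<Longrightarrow> Ginv (GG a) = a"
  unfolding Ginv_def by (rule inv_into_f_f[OF GG_inj])

lemma GG_img: assumes "GG (-1) \<le> z" "z \<le> GG 2" shows "z \<in> GG ` {-1..2}"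
  using IVT'[of GG "-1" z 2] assms GG_cont by force

lemma GG_Ginv: assumes "GG (-1) \<le> z" "z \<le> GG 2" shows "GG (Ginv z) = z"
  unfolding Ginv_def by (rule f_inv_into_f[OF GG_img[OF assms]])

lemma Ginv_cont: "continuous_on {GG (-1)<..<GG 2} Ginv"
proof -
  have "continuous_on (GG ` {-1..2}) Ginv"
    by (rule continuous_on_inv[OF GG_cont]) (auto simp: Ginv_GG)
  moreover have "{GG (-1)<..<GG 2} \<subseteq> GG ` {-1..2}" using GG_img by auto
  ultimately show ?thesis by (rule continuous_on_subset)
qed

lemma Ginv_deriv: assumes a: "a \<in> {0..1}"
  shows "(Ginv has_real_derivative rr a) (at (GG a))"
proof -
  have lo: "GG (-1) < GG a" and hi: "GG a < GG 2" using a GG_strict by auto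
  have "isCont Ginv (GG a)"
    using Ginv_cont lo hi by (simp add: continuous_on_eq_continuous_at)
  moreover have "(GG has_real_derivative 1 / rr (Ginv (GG a))) (at (Ginv (GG a)))"
    using GG_deriv[of a] a Ginv_GG[of a] by simp
  ultimately have "(Ginv has_real_derivative inverse (1 / rr (Ginv (GG a)))) (at (GG a))"
    by (intro DERIV_inverse_function[where a = "GG (-1)" and b = "GG 2"])
       (use lo hi rr_pos[of "Ginv (GG a)"] GG_Ginv in auto)
  then show ?thesis using Ginv_GG[of a] a by simp
qed


definition W :: "real \<Rightarrow> real" where "W t = integral {0..t} v"

lemma W_cont: "continuous_on {0..1} W"
  unfolding W_def by (rule indefinite_integral_continuous_1[OF v_int]) auto

lemma W0: "W 0 = 0" by (simp add: W_def)
lemma W1: "W 1 = V" by (simp add: W_def V_def)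

lemma G_nonneg: "0 \<le> G Xo"
  unfolding G_def by (rule integral_nonneg) (use inv_rho_int Xo_in rho_pos in \<open>auto intro: less_imp_le\<close>)

definition T where "T = (SOME T. 0 \<le> T \<and> T \<le> 1 \<and> W T = V * G Xo)"

lemma T_prop: "0 \<le> T" "T \<le> 1" "W T = V * G Xo"
proof -
  have "\<exists>T. 0 \<le> T \<and> T \<le> 1 \<and> W T = V * G Xo"
    by (rule IVT'[OF _ _ _ W_cont]) (use W0 W1 G_nonneg GXo V_pos in auto)
  then show "0 \<le> T" "T \<le> 1" "W T = V * G Xo"
    unfolding T_def by (metis (mono_tags, lifting) someI_ex)+
qed

lemma W_mono: "0 \<le> s \<Longrightarrow> s \<le> t \<Longrightarrow> t \<le> 1 \<Longrightarrow> W s \<le> W t"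
proof -
  assume a: "0 \<le> s" "s \<le> t" "t \<le> 1"
  have "W s + integral {s..t} v = W t"
    unfolding W_def by (rule Henstock_Kurzweil_Integration.integral_combine) (use a v_int in auto)
  moreover have "0 \<le> integral {s..t} v"
    by (rule integral_nonneg) (use a v_int v_nonneg in auto)
  ultimately show ?thesis by simp
qed

definition uu :: "real \<Rightarrow> real" where "uu t = Ginv (GG 0 + W t / V)"

lemma uu_prop: assumes t: "0 \<le> t" "t \<le> T"
  shows "uu t \<in> {0..Xo}" "GG (uu t) = GG 0 + W t / V"
proof -
  have T: "0 \<le> T" "T \<le> 1" "W T = V * G Xo" using T_prop by auto
  have "0 \<le> W t" using W_mono[of 0 t] W0 t T by simp
  moreover have "W t \<le> V * G Xo" using W_mono[of t T] t T by simp
  moreover have "W t / V \<le> G Xo" using \<open>W t \<le> V * G Xo\<close> V_pos by (simp add: divide_simps mult.commute)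
  ultimately have "GG 0 \<le> GG 0 + W t / V" "GG 0 + W t / V \<le> GG Xo"
    using V_pos GG_G[OF Xo_in] by auto
  then obtain a where a: "0 \<le> a" "a \<le> Xo" "GG a = GG 0 + W t / V"
    using IVT'[of GG 0 "GG 0 + W t / V" Xo] continuous_on_subset[OF GG_cont, of "{0..Xo}"] Xo_in
    by auto
  have "uu t = a" unfolding uu_def a(3)[symmetric] using a Xo_in by (intro Ginv_GG) auto
  then show "uu t \<in> {0..Xo}" "GG (uu t) = GG 0 + W t / V" using a by auto
qed

lemma uu0: "uu 0 = 0" unfolding uu_def W0 by (simp add: Ginv_GG)

lemma uuT: "uu T = Xo"
  unfolding uu_def using T_prop GG_G[OF Xo_in] V_pos Ginv_GG[of Xo] Xo_in by simp

lemma uu_deriv: assumes t: "0 \<le> t" "t \<le> T"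
  shows "(uu has_real_derivative \<rho> (uu t) * (v t / V)) (at t within {0..1})"
proof -
  have T: "T \<le> 1" using T_prop by simp
  have ut: "uu t \<in> {0..1}" using uu_prop[OF t] Xo_in by auto
  have W: "(W has_real_derivative v t) (at t within {0..1})"
    unfolding W_def by (rule integral_has_real_derivative[OF v_cont]) (use t T in auto)
  have g: "((\<lambda>t. GG 0 + W t / V) has_real_derivative v t / V) (at t within {0..1})"
    using V_pos by (auto intro!: derivative_eq_intros W)
  have Gi: "(Ginv has_real_derivative rr (uu t)) (at (GG 0 + W t / V))"
    using Ginv_deriv[OF ut] uu_prop(2)[OF t] by simp
  have "((\<lambda>t. Ginv (GG 0 + W t / V)) has_real_derivative rr (uu t) * (v t / V)) (at t within {0..1})"
    by (rule DERIV_chain2[OF Gi g])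
  then show ?thesis using rr_eq[OF ut] unfolding uu_def by simp
qed

lemma uu_has_int: assumes s: "0 \<le> s" "s \<le> T"
  shows "((\<lambda>t. \<rho> (uu t) * v t) has_integral V * uu s) {0..s}"
proof -
  have T: "T \<le> 1" using T_prop by simp
  have "((\<lambda>t. \<rho> (uu t) * (v t / V)) has_integral uu s - uu 0) {0..s}"
  proof (rule fundamental_theorem_of_calculus)
    show "0 \<le> s" using s by simp
    fix t assume t: "t \<in> {0..s}"
    have "(uu has_real_derivative \<rho> (uu t) * (v t / V)) (at t within {0..s})"
      by (rule DERIV_subset[OF uu_deriv]) (use t s T in auto)
    then show "(uu has_vector_derivative \<rho> (uu t) * (v t / V)) (at t within {0..s})"
      by (simp add: has_real_derivative_iff_has_vector_derivative)
  qed
  from has_integral_mult_right[OF this, of V] show ?thesis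
    using V_pos uu0 by simp
qed

definition xx :: "real \<Rightarrow> real" where "xx t = (if t < T then \<rho> (uu t) * v t else 0)"

lemma xx_has_int: assumes s: "0 \<le> s" "s \<le> 1"
  shows "(xx has_integral V * uu (min s T)) {0..s}"
proof (cases "s \<le> T")
  case True
  have "(xx has_integral V * uu s) {0..s}"
    by (rule has_integral_spike_finite[of "{T}", OF _ _ uu_has_int[of s]])
       (use True s in \<open>auto simp: xx_def\<close>)
  then show ?thesis using True by (simp add: min_def)
next
  case False
  have T: "0 \<le> T" "T \<le> 1" using T_prop by auto
  have 1: "(xx has_integral V * uu T) {0..T}"
    by (rule has_integral_spike_finite[of "{T}", OF _ _ uu_has_int[of T]])
       (use T in \<open>auto simp: xx_def\<close>)
  have 2: "(xx has_integral 0) {T..s}"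
  proof -
    have "((\<lambda>t. 0::real) has_integral 0) {T..s}" by simp
    then show ?thesis by (rule has_integral_eq[rotated]) (auto simp: xx_def)
  qed
  from has_integral_combine[OF _ _ 1 2] False T show ?thesis by simp
qed

lemma xx_int: "integral {0..s} xx = V * uu (min s T)" if "0 \<le> s" "s \<le> 1" for s
  using xx_has_int[OF that] by (simp add: integral_unique)

lemma xx_feasible: "feasible \<rho> v V xx"
  unfolding feasible_def
proof safe
  show "xx integrable_on {0..1}" using xx_has_int[of 1] by auto
  fix t :: real assume t: "t \<in> {0..1}"
  have T: "0 \<le> T" "T \<le> 1" using T_prop by auto
  have ar: "alloc_rate \<rho> V xx t = \<rho> (uu (min t T))"
    unfolding alloc_rate_def using xx_int[of t] t V_pos by simp
  have um: "uu (min t T) \<in> {0..1}" using uu_prop(1)[of "min t T"] t T Xo_in by auto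
  have r: "0 < \<rho> (uu (min t T))" using rho_pos[OF um] .
  show "0 \<le> xx t"
  proof (cases "t < T")
    case True
    then show ?thesis unfolding xx_def using r v_nonneg[OF t] by (simp add: min_def)
  qed (simp add: xx_def)
  show "xx t \<le> alloc_rate \<rho> V xx t * v t"
  proof (cases "t < T")
    case True
    then show ?thesis unfolding ar xx_def using r v_nonneg[OF t] by (simp add: min_def)
  next
    case False
    then show ?thesis unfolding ar xx_def using r v_nonneg[OF t] by simp
  qed
qed

lemma xx_total: "total_paid xx = Xo * V"
  unfolding total_paid_def using xx_int[of 1] T_prop uuT by (simp add: min_def)

lemma xx_utility: "utility \<rho> v V xx = V * objective \<rho> Xo"
proof -
  have T: "0 \<le> T" "T \<le> 1" using T_prop by auto
  have eq: "alloc_rate \<rho> V xx t * v t - xx t = (if t < T then 0 else \<rho> Xo * v t)"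
    if t: "t \<in> {0..1}" for t
  proof -
    have ar: "alloc_rate \<rho> V xx t = \<rho> (uu (min t T))"
      unfolding alloc_rate_def using xx_int[of t] t V_pos by simp
    show ?thesis
    proof (cases "t < T")
      case True
      then have "min t T = t" by simp
      then show ?thesis unfolding ar xx_def using True by simp
    next
      case False
      then have "min t T = T" by simp
      then show ?thesis unfolding ar xx_def using False uuT by simp
    qed
  qed
  have 1: "((\<lambda>t. if t < T then 0 else \<rho> Xo * v t) has_integral 0) {0..T}"
    by (rule has_integral_spike_finite[of "{T}", OF _ _ has_integral_0]) auto
  have 2: "((\<lambda>t. if t < T then 0 else \<rho> Xo * v t) has_integral \<rho> Xo * (V - W T)) {T..1}"
  proof -
    have "W T + integral {T..1} v = W 1"
      unfolding W_def by (rule Henstock_Kurzweil_Integration.integral_combine) (use T v_int in auto)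
    then have "integral {T..1} v = V - W T" using W1 by simp
    moreover have "(v has_integral integral {T..1} v) {T..1}"
      using integrable_integral[OF v_int[of T 1]] T by simp
    ultimately have "(v has_integral (V - W T)) {T..1}" by simp
    from has_integral_mult_right[OF this, of "\<rho> Xo"]
    show ?thesis by (rule has_integral_eq[rotated]) auto
  qed
  have H: "((\<lambda>t. if t < T then 0 else \<rho> Xo * v t) has_integral \<rho> Xo * (V - W T)) {0..1}"
    using has_integral_combine[OF T 1 2] by simp
  have "((\<lambda>t. alloc_rate \<rho> V xx t * v t - xx t) has_integral \<rho> Xo * (V - W T)) {0..1}"
    by (rule has_integral_eq[OF _ H]) (rule eq[symmetric])
  then have "utility \<rho> v V xx = \<rho> Xo * (V - W T)"
    unfolding utility_def by (simp add: integral_unique)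
  then show ?thesis using T_prop by (simp add: obj_eq algebra_simps)
qed

end


theorem lemma5:
  fixes \<rho> v :: "real \<Rightarrow> real" and V Xopt :: real
  assumes rho_cont: "continuous_on {0..1} \<rho>"
    and rho_mono: "mono_on {0..1} \<rho>"
    and rho_range: "\<forall>a\<in>{0..1}. 0 < \<rho> a \<and> \<rho> a \<le> 1"
    and v_lip: "\<exists>L. L-lipschitz_on {0..1} v"
    and v_nonneg: "\<forall>t\<in>{0..1}. 0 \<le> v t"
    and V_def: "V = integral {0..1} v"
    and Xopt_in: "Xopt \<in> {0..1}"
    and Xopt_max: "\<forall>a\<in>{0..1}. objective \<rho> a \<le> objective \<rho> Xopt"
  shows "(\<exists>x. dominant \<rho> v V x \<and> total_paid x \<ge> Xopt * V) \<and>
         ((\<forall>a\<in>{0..1}. a \<noteq> Xopt \<longrightarrow> objective \<rho> a < objective \<rho> Xopt) \<longrightarrow>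
            (\<forall>x. dominant \<rho> v V x \<longrightarrow> total_paid x \<ge> Xopt * V))"
proof -
  obtain L where "L-lipschitz_on {0..1} v" using v_lip by blast
  then have v_cont: "continuous_on {0..1} v" by (rule lipschitz_on_continuous_on)
  have V_nonneg: "0 \<le> V"
    unfolding V_def by (rule integral_nonneg) (use v_nonneg v_cont integrable_continuous_interval in auto)
  show ?thesis
  proof (cases "V = 0")
    case True
    have v0: "v t = 0" if t: "t \<in> {0..1}" for t
    proof -
      have "(v has_integral 0) (cbox 0 1)"
        using True V_def integrable_integral[OF integrable_continuous_interval[OF v_cont]] by simp
      then show ?thesis
        using has_integral_0_cbox_imp_0[of 0 1 v t] v_cont v_nonneg t by auto
    qed
    have feas0: "y t = 0" if "feasible \<rho> v V y" "t \<in> {0..1}" for y t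
      using that v0[of t] unfolding feasible_def by force
    have util0: "utility \<rho> v V y = 0" if "feasible \<rho> v V y" for y
    proof -
      have "utility \<rho> v V y = integral {0..1} (\<lambda>t::real. 0::real)"
        unfolding utility_def by (rule Henstock_Kurzweil_Integration.integral_cong) (use feas0[OF that] v0 in auto)
      then show ?thesis by simp
    qed
    have f0: "feasible \<rho> v V (\<lambda>t. 0)"
      unfolding feasible_def using v0 by (simp add: integrable_0)
    have "dominant \<rho> v V (\<lambda>t. 0)"
      unfolding dominant_def using f0 util0 by simp
    moreover have "total_paid x \<ge> Xopt * V" if "dominant \<rho> v V x" for x
    proof -
      have "feasible \<rho> v V x" using that by (simp add: dominant_def)
      then have "0 \<le> total_paid x"
        unfolding total_paid_def feasible_def by (auto intro: integral_nonneg)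
      then show ?thesis using True by simp
    qed
    ultimately show ?thesis using True by (auto simp: total_paid_def)
  next
    case False
    then have Vpos: "0 < V" using V_nonneg by simp
    interpret P: P2P \<rho> v V
      by unfold_locales (use rho_cont rho_mono rho_range v_cont v_nonneg V_def Vpos in auto)
    have "objective \<rho> 0 \<le> objective \<rho> Xopt" using Xopt_max by auto
    moreover have "objective \<rho> 0 = \<rho> 0" by (simp add: P.obj_eq P.G0)
    moreover have "0 < \<rho> 0" using rho_range by auto
    ultimately have "0 < \<rho> Xopt * (1 - P.G Xopt)"
      by (simp add: P.obj_eq)
    moreover have "0 < \<rho> Xopt" using rho_range Xopt_in by auto
    ultimately have GX: "P.G Xopt < 1"
      by (simp add: zero_less_mult_iff)
    interpret Q: P2P_opt \<rho> v V Xopt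
      by unfold_locales (use Xopt_in GX in auto)
    have bound: "utility \<rho> v V y \<le> V * objective \<rho> (total_paid y / V) \<and> total_paid y / V \<in> {0..1}"
      if "feasible \<rho> v V y" for y
    proof -
      interpret F: P2P_feas \<rho> v V y by unfold_locales (rule that)
      show ?thesis using F.utility_bound F.total_paid_eq F.u_range[of 1] by simp
    qed
    have dom: "dominant \<rho> v V Q.xx"
      unfolding dominant_def
    proof (intro conjI allI impI Q.xx_feasible)
      fix y assume "feasible \<rho> v V y"
      then have "utility \<rho> v V y \<le> V * objective \<rho> (total_paid y / V)" "total_paid y / V \<in> {0..1}"
        using bound by auto
      moreover have "objective \<rho> (total_paid y / V) \<le> objective \<rho> Xopt"
        using Xopt_max calculation(2) by auto
      ultimately show "utility \<rho> v V y \<le> utility \<rho> v V Q.xx"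
        using Q.xx_utility Vpos by (smt (verit) mult_left_mono)
    qed
    have part2: "total_paid x \<ge> Xopt * V"
      if strict: "\<forall>a\<in>{0..1}. a \<noteq> Xopt \<longrightarrow> objective \<rho> a < objective \<rho> Xopt"
        and dx: "dominant \<rho> v V x" for x
    proof -
      have fx: "feasible \<rho> v V x" and ge: "utility \<rho> v V Q.xx \<le> utility \<rho> v V x"
        using dx Q.xx_feasible unfolding dominant_def by auto
      have b: "utility \<rho> v V x \<le> V * objective \<rho> (total_paid x / V)" "total_paid x / V \<in> {0..1}"
        using bound[OF fx] by auto
      have "total_paid x / V = Xopt"
      proof (rule ccontr)
        assume "total_paid x / V \<noteq> Xopt"
        then have "objective \<rho> (total_paid x / V) < objective \<rho> Xopt" using strict b(2) by auto
        then have "V * objective \<rho> (total_paid x / V) < V * objective \<rho> Xopt" using Vpos by simp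
        then show False using b(1) ge Q.xx_utility by simp
      qed
      then show ?thesis using Vpos by (simp add: field_simps)
    qed
    show ?thesis using dom Q.xx_total part2 by auto
  qed
qed


end
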